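(* Let $P$ be a finite point set in $\mathbb{R}^d$, let $s>0$, and let $A,B\subseteq P$ be such that $\{A,B\}$ is an $s$-well-separated pair with $|B|\geq 2$. (1) For any point $a\in A$ and any two distinct points $b,c\in B$, $|\Delta_{abc}|\leq (1+2/s)\,|\Delta^*(a,b)|$. (2) Assume additionally $|A|\geq 2$. For any two points $a,a'\in A$ and any two points $b,b'\in B$, $|\Delta^*(a,b)|\leq (1+8/s)\,|\Delta^*(a',b')|$.
   Context: Distances are Euclidean. Two point sets $A$ and $B$ form an $s$-well-separated pair if $A$ and $B$ can each be covered by a ball of the same radius $\rho$ such that the distance between the two balls is at least $s\cdot\rho$. $|\Delta_{abc}|=|ab|+|bc|+|ca|$ is the perimeter of the triangle on $a,b,c$. For distinct $p,q\in P$, $\Delta^*(p,q)$ is the minimum-perimeter triangle $\Delta_{pqx}$ over $x\in P\setminus\{p,q\}$. *)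

theory Defs
  imports "HOL-Analysis.Analysis"
begin

definition perim :: "'a::euclidean_space \<Rightarrow> 'a \<Rightarrow> 'a \<Rightarrow> real" where
  "perim a b c = dist a b + dist b c + dist c a"

definition tri_star :: "'a::euclidean_space set \<Rightarrow> 'a \<Rightarrow> 'a \<Rightarrow> real" where
  "tri_star P p q = Min ((\<lambda>x. perim p q x) ` (P - {p, q}))"

definition well_separated :: "real \<Rightarrow> 'a::euclidean_space set \<Rightarrow> 'a set \<Rightarrow> bool" where
  "well_separated s A B \<longleftrightarrow>
     (\<exists>\<rho> c1 c2. \<rho> \<ge> 0 \<and> A \<subseteq> cball c1 \<rho> \<and> B \<subseteq> cball c2 \<rho> \<and>
        setdist (cball c1 \<rho>) (cball c2 \<rho>) \<ge> s * \<rho>)"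

end

theory Submission
  imports Defs
begin

lemma ts_le: "finite P \<Longrightarrow> x \<in> P - {p,q} \<Longrightarrow> tri_star P p q \<le> perim p q x"
  unfolding tri_star_def by (rule Min_le) auto

lemma ts_ge: "finite P \<Longrightarrow> x \<in> P - {p,q} \<Longrightarrow> 2 * dist p q \<le> tri_star P p q"
proof -
  assume f: "finite P" and x: "x \<in> P - {p,q}"
  have "tri_star P p q \<in> (\<lambda>x. perim p q x) ` (P - {p, q})"
    unfolding tri_star_def using f x by (intro Min_in) auto
  then obtain y where "tri_star P p q = perim p q y" by auto
  moreover have "dist p q \<le> dist q y + dist y p"
    by (metis dist_commute dist_triangle)
  moreover have "perim p q y = dist p q + dist q y + dist y p" by (simp add: perim_def)
  ultimately show ?thesis by argo
qed

lemma other: assumes "card B \<ge> 2" "b \<in> B" shows "\<exists>c\<in>B. c \<noteq> b"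
proof (rule ccontr)
  assume "\<not> (\<exists>c\<in>B. c \<noteq> b)"
  then have "B \<subseteq> {b}" by blast
  then have "card B \<le> card {b}" by (intro card_mono) simp_all
  then show False using assms(1) by simp
qed

theorem lemma6:
  fixes P A B :: "'a::euclidean_space set" and s :: real
  assumes "finite P" and "s > 0" and "A \<subseteq> P" and "B \<subseteq> P"
    and "well_separated s A B" and "card B \<ge> 2"
  shows "(\<forall>a\<in>A. \<forall>b\<in>B. \<forall>c\<in>B. b \<noteq> c \<longrightarrow>
            perim a b c \<le> (1 + 2 / s) * tri_star P a b)
       \<and> (card A \<ge> 2 \<longrightarrow> (\<forall>a\<in>A. \<forall>a'\<in>A. \<forall>b\<in>B. \<forall>b'\<in>B.
            tri_star P a b \<le> (1 + 8 / s) * tri_star P a' b'))"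
proof -
  obtain \<rho> c1 c2 where r0: "\<rho> \<ge> 0" and Ab: "A \<subseteq> cball c1 \<rho>" and Bb: "B \<subseteq> cball c2 \<rho>"
    and sd: "setdist (cball c1 \<rho>) (cball c2 \<rho>) \<ge> s * \<rho>"
    using assms(5) unfolding well_separated_def by blast
  have sep: "s * \<rho> \<le> dist x y" if "x \<in> A" "y \<in> B" for x y
  proof -
    have "x \<in> cball c1 \<rho>" "y \<in> cball c2 \<rho>" using that Ab Bb by blast+
    then have "setdist (cball c1 \<rho>) (cball c2 \<rho>) \<le> dist x y" by (rule setdist_le_dist)
    then show ?thesis using sd by linarith
  qed
  have dA: "dist x y \<le> 2 * \<rho>" if "x \<in> A" "y \<in> A" for x y
  proof -
    have "dist x y \<le> dist x c1 + dist c1 y" by (rule dist_triangle)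
    moreover have "x \<in> cball c1 \<rho>" "y \<in> cball c1 \<rho>" using that Ab by blast+
    then have "dist x c1 \<le> \<rho>" "dist c1 y \<le> \<rho>" by (simp_all add: mem_cball dist_commute)
    ultimately show ?thesis by linarith
  qed
  have dB: "dist x y \<le> 2 * \<rho>" if "x \<in> B" "y \<in> B" for x y
  proof -
    have "dist x y \<le> dist x c2 + dist c2 y" by (rule dist_triangle)
    moreover have "x \<in> cball c2 \<rho>" "y \<in> cball c2 \<rho>" using that Bb by blast+
    then have "dist x c2 \<le> \<rho>" "dist c2 y \<le> \<rho>" by (simp_all add: mem_cball dist_commute)
    ultimately show ?thesis by linarith
  qed
  have "B \<noteq> {}" using assms(6) by (intro notI) simp
  then obtain b1 where "b1 \<in> B" by blast
  then obtain b2 where "b2 \<in> B" "b2 \<noteq> b1" using other[OF assms(6) \<open>b1 \<in> B\<close>] by blast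
  have rpos: "\<rho> > 0"
  proof (rule ccontr)
    assume "\<not> \<rho> > 0"
    then have "\<rho> = 0" using r0 by simp
    then show False using dB[OF \<open>b1 \<in> B\<close> \<open>b2 \<in> B\<close>] \<open>b2 \<noteq> b1\<close> by simp
  qed
  have sepr: "\<rho> \<le> dist x y / s" if "x \<in> A" "y \<in> B" for x y
    using sep[OF that] assms(2) by (simp add: pos_le_divide_eq mult.commute)
  have neq: "x \<noteq> y" if "x \<in> A" "y \<in> B" for x y
    proof
    assume "x = y"
    moreover have "s * \<rho> > 0" using assms(2) rpos by simp
    ultimately show False using sep[OF that] by simp
  qed
  have pb: "perim a b c \<le> 2 * dist a b + 2 * dist b c" for a b c :: 'a
  proof -
    have "dist c a \<le> dist c b + dist b a" by (rule dist_triangle)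
    then show ?thesis unfolding perim_def by (simp add: dist_commute)
  qed
  have part1: "perim a b c \<le> (1 + 2 / s) * tri_star P a b"
    if a: "a \<in> A" and b: "b \<in> B" and c: "c \<in> B" and bc: "b \<noteq> c" for a b c
  proof -
    have cin: "c \<in> P - {a,b}" using c bc neq[OF a c] assms(4) by auto
    have t: "2 * dist a b \<le> tri_star P a b" by (rule ts_ge[OF assms(1) cin])
    have "perim a b c \<le> 2 * dist a b + 2 * (2 * \<rho>)" using pb[of a b c] dB[OF b c] by linarith
    also have "\<dots> \<le> 2 * dist a b + 2 * (2 * (dist a b / s))" using sepr[OF a b] by argo
    also have "\<dots> = (1 + 2 / s) * (2 * dist a b)" by (simp add: field_simps)
    also have "\<dots> \<le> (1 + 2 / s) * tri_star P a b"
      using t assms(2) by (intro mult_left_mono) auto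
    finally show ?thesis .
  qed
  have part2: "tri_star P a b \<le> (1 + 8 / s) * tri_star P a' b'"
    if a: "a \<in> A" and a': "a' \<in> A" and b: "b \<in> B" and b': "b' \<in> B" for a a' b b'
  proof -
    obtain c where c: "c \<in> B" "c \<noteq> b" using other[OF assms(6) b] by blast
    obtain c' where c': "c' \<in> B" "c' \<noteq> b'" using other[OF assms(6) b'] by blast
    have cin: "c \<in> P - {a,b}" using c neq[OF a c(1)] assms(4) by auto
    have cin': "c' \<in> P - {a',b'}" using c' neq[OF a' c'(1)] assms(4) by auto
    have t: "2 * dist a' b' \<le> tri_star P a' b'" by (rule ts_ge[OF assms(1) cin'])
    have "tri_star P a b \<le> perim a b c" by (rule ts_le[OF assms(1) cin])
    also have "\<dots> \<le> 2 * dist a b + 2 * (2 * \<rho>)" using pb[of a b c] dB[OF b c(1)] by linarith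
    also have "\<dots> \<le> 2 * (dist a a' + dist a' b' + dist b' b) + 4 * \<rho>"
      using dist_triangle[of a b a'] dist_triangle[of a' b b'] by argo
    also have "\<dots> \<le> 2 * dist a' b' + 16 * \<rho>"
      using dA[OF a a'] dB[OF b' b] r0 by argo
    also have "\<dots> \<le> 2 * dist a' b' + 16 * (dist a' b' / s)" using sepr[OF a' b'] by argo
    also have "\<dots> = (1 + 8 / s) * (2 * dist a' b')" by (simp add: field_simps)
    also have "\<dots> \<le> (1 + 8 / s) * tri_star P a' b'"
      using t assms(2) by (intro mult_left_mono) auto
    finally show ?thesis .
  qed
  show ?thesis
    apply (intro conjI impI ballI)
     apply (rule part1; assumption)
    apply (rule part2; assumption)
    done
qed

end
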